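(* Index the six faces of a cube by a set $F$, and call two distinct faces adjacent if they share an edge (so each face is adjacent to exactly four faces, all except itself and the opposite face). Define the linear operator $A:\mathbb{R}^F\to\mathbb{R}^F$ by $(Ax)_f=\frac14\sum_{g \text{ adjacent to } f} x_g$. Then for every $x\in\mathbb{R}^F$, as $n\to\infty$, $A^n x$ converges to the vector all of whose entries equal $\frac16\sum_{g\in F}x_g$.
   Context: Interpretation: $x_f$ is the amount of kasha in the bowl on face $f$; each minute every dragon on a face takes one quarter of the kasha of each of its four neighboring faces, while all of its own kasha is taken, so one minute transforms $x$ into $Ax$. Amounts may be arbitrary real numbers. *)

theory Defs
  imports "HOL-Analysis.Analysis"
begin

text \<open>The six faces of a cube: a face is determined by the coordinate axis it is
  orthogonal to and by the side (sign) on which it lies.\<close>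

datatype axis = AX | AY | AZ

type_synonym face = "axis \<times> bool"

definition opposite :: "face \<Rightarrow> face" where
  "opposite f = (fst f, \<not> snd f)"

text \<open>Two distinct faces are adjacent iff they share an edge, i.e. iff they are
  neither equal nor opposite.\<close>
definition adjacent :: "face \<Rightarrow> face \<Rightarrow> bool" where
  "adjacent f g \<longleftrightarrow> f \<noteq> g \<and> g \<noteq> opposite f"

definition kashaA :: "(face \<Rightarrow> real) \<Rightarrow> (face \<Rightarrow> real)" where
  "kashaA x = (\<lambda>f. (1/4) * (\<Sum>g\<in>{g. adjacent f g}. x g))"

end

theory Submission
  imports Defs
begin

lemma UNIV_face: "(UNIV::face set) = {(AX,True),(AX,False),(AY,True),(AY,False),(AZ,True),(AZ,False)}"
proof -
  have "(a::axis, b) \<in> {(AX,True),(AX,False),(AY,True),(AY,False),(AZ,True),(AZ,False)}" for a b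
    by (cases a; cases b) auto
  thus ?thesis by auto
qed

lemma finite_face[simp]: "finite (UNIV::face set)"
  by (simp add: UNIV_face)

lemma kasha_formula:
  "kashaA x f = ((\<Sum>g\<in>UNIV. x g) - x f - x (opposite f)) / 4"
proof -
  have "(\<Sum>g\<in>{g. adjacent f g}. x g) = (\<Sum>g\<in>UNIV. if adjacent f g then x g else 0)"
    using sum.inter_restrict[of UNIV x "{g. adjacent f g}"] by simp
  also have "\<dots> = (\<Sum>g\<in>UNIV. x g) - x f - x (opposite f)"
    unfolding UNIV_face
    by (cases f; rename_tac a b; case_tac a; case_tac b; simp add: adjacent_def opposite_def)
  finally show ?thesis unfolding kashaA_def by simp
qed

lemma kasha_sum: "(\<Sum>g\<in>UNIV. kashaA x g) = (\<Sum>g\<in>UNIV. x g)"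
  unfolding kasha_formula by (simp add: UNIV_face opposite_def field_simps)

lemma kasha_sym: "kashaA x (opposite f) = kashaA x f"
  unfolding kasha_formula by (cases f) (simp add: opposite_def)

lemma kasha_step:
  fixes c :: real
  assumes "\<And>f. y (opposite f) = y f" and "c = (1/6) * (\<Sum>g\<in>UNIV. y g)"
  shows "kashaA y f - c = (-1/2) * (y f - c)"
  unfolding kasha_formula using assms by (simp add: field_simps)

lemma iter_formula:
  fixes x :: "face \<Rightarrow> real"
  defines "c \<equiv> (1/6) * (\<Sum>g\<in>UNIV. x g)"
  shows "(\<Sum>g\<in>UNIV. (kashaA ^^ Suc n) x g) = (\<Sum>g\<in>UNIV. x g) \<and>
    (\<forall>f. (kashaA ^^ Suc n) x f - c = (-1/2)^n * (kashaA x f - c))"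
proof (induction n)
  case 0
  then show ?case by (simp add: kasha_sum)
next
  case (Suc n)
  let ?y = "(kashaA ^^ Suc n) x"
  have sym: "\<And>f. ?y (opposite f) = ?y f" by (simp add: kasha_sym)
  have cy: "c = (1/6) * (\<Sum>g\<in>UNIV. ?y g)" using Suc c_def by simp
  show ?case
  proof
    show "(\<Sum>g\<in>UNIV. (kashaA ^^ Suc (Suc n)) x g) = (\<Sum>g\<in>UNIV. x g)"
      using Suc by (simp add: kasha_sum)
    show "\<forall>f. (kashaA ^^ Suc (Suc n)) x f - c = (-1/2)^Suc n * (kashaA x f - c)"
    proof
      fix f
      have "(kashaA ^^ Suc (Suc n)) x f - c = (-1/2) * (?y f - c)"
        using kasha_step[OF sym cy] by simp
      also have "\<dots> = (-1/2)^Suc n * (kashaA x f - c)" using Suc[THEN conjunct2, rule_format, of f] by simp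
      finally show "(kashaA ^^ Suc (Suc n)) x f - c = (-1/2)^Suc n * (kashaA x f - c)" .
    qed
  qed
qed

theorem mainTheorem1:
  fixes x :: "face \<Rightarrow> real"
  shows "(\<lambda>n. (kashaA ^^ n) x) \<longlonglongrightarrow> (\<lambda>f. (1/6) * (\<Sum>g\<in>UNIV. x g))"
proof -
  define c where "c = (1/6) * (\<Sum>g\<in>UNIV. x g)"
  define G where "G = (\<lambda>t::real. (\<lambda>f. c + t * (kashaA x f - c)))"
  have eq: "(kashaA ^^ Suc n) x = G ((-1/2)^n)" for n
  proof
    fix f show "(kashaA ^^ Suc n) x f = G ((-1/2)^n) f"
      using iter_formula[of n x, THEN conjunct2, rule_format, of f] unfolding G_def c_def
      by (simp add: algebra_simps)
  qed
  have cont: "continuous_on UNIV G"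
    unfolding G_def by (intro continuous_on_coordinatewise_then_product continuous_intros)
  have lim0: "(\<lambda>n. (-1/2::real)^n) \<longlonglongrightarrow> 0"
    by (rule LIMSEQ_power_zero) simp
  have "(\<lambda>n. G ((-1/2)^n)) \<longlonglongrightarrow> G 0"
    using continuous_on_tendsto_compose[OF cont lim0] by simp
  moreover have "G 0 = (\<lambda>f. c)" unfolding G_def by simp
  ultimately have "(\<lambda>n. (kashaA ^^ Suc n) x) \<longlonglongrightarrow> (\<lambda>f. c)" unfolding eq by simp
  thus ?thesis unfolding c_def by (rule LIMSEQ_imp_Suc)
qed

end
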